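(* The metric space defined on the equivalence classes of polygonal curves in $\mathbb{X}_z^{d}$ that have pairwise discrete Fréchet distance $0$, equipped with the discrete Fréchet distance, has doubling dimension $\Theta(dz)$.
   Context: A polygonal curve of complexity $z$ in $\mathbb{R}^d$ is a sequence $\langle p_1,\dots,p_z\rangle$ of points of $\mathbb{R}^d$; $\mathbb{X}_z^d$ is the set of all such curves. A traversal between curves of complexities $z$ and $\ell$ is a sequence of index pairs $(i_1,j_1),\dots,(i_t,j_t)$ with $(i_1,j_1)=(1,1)$, $(i_t,j_t)=(z,\ell)$ and, for $r<t$, $i_{r+1}-i_r\in\{0,1\}$, $j_{r+1}-j_r\in\{0,1\}$, $(i_{r+1}-i_r)+(j_{r+1}-j_r)\ge1$; the discrete Fréchet distance is $\mathbf{d}_{dF}(\langle p_i\rangle,\langle q_j\rangle)=\min_T\max_{(i,j)\in T}\|p_i-q_j\|_2$ over all traversals $T$. The doubling dimension of a metric space is the smallest $t\ge0$ such that every ball can be covered by at most $2^t$ balls of half the radius. *)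

theory Defs
  imports "HOL-Analysis.Analysis"
begin

text \<open>Points of R^d are real lists of length d; curves are lists of points.
  Indices are 0-based.\<close>

definition euclid_dist :: "real list \<Rightarrow> real list \<Rightarrow> real" where
  "euclid_dist p q = sqrt (\<Sum>k<length p. (p ! k - q ! k)^2)"

definition curves :: "nat \<Rightarrow> nat \<Rightarrow> real list list set" where
  "curves d z = {P. length P = z \<and> (\<forall>p\<in>set P. length p = d)}"

definition is_traversal :: "nat \<Rightarrow> nat \<Rightarrow> (nat \<times> nat) list \<Rightarrow> bool" where
  "is_traversal z l T \<longleftrightarrow> T \<noteq> [] \<and> hd T = (0, 0) \<and> last T = (z - 1, l - 1) \<and>
     (\<forall>r. Suc r < length T \<longrightarrow>
        (let (i, j) = T ! r; (i', j') = T ! Suc r in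
          i \<le> i' \<and> i' \<le> Suc i \<and> j \<le> j' \<and> j' \<le> Suc j \<and> (i, j) \<noteq> (i', j')))"

definition dfrechet :: "real list list \<Rightarrow> real list list \<Rightarrow> real" where
  "dfrechet P Q = Min {Max {euclid_dist (P ! i) (Q ! j) | i j. (i, j) \<in> set T} | T.
                        is_traversal (length P) (length Q) T}"

definition frechet_classes :: "nat \<Rightarrow> nat \<Rightarrow> real list list set set" where
  "frechet_classes d z = {{Q \<in> curves d z. dfrechet P Q = 0} | P. P \<in> curves d z}"

definition class_dist :: "real list list set \<Rightarrow> real list list set \<Rightarrow> real" where
  "class_dist A B = dfrechet (SOME P. P \<in> A) (SOME Q. Q \<in> B)"

definition cball_in :: "'a set \<Rightarrow> ('a \<Rightarrow> 'a \<Rightarrow> real) \<Rightarrow> 'a \<Rightarrow> real \<Rightarrow> 'a set" where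
  "cball_in S \<delta> x r = {y \<in> S. \<delta> x y \<le> r}"

definition doubling_ok :: "'a set \<Rightarrow> ('a \<Rightarrow> 'a \<Rightarrow> real) \<Rightarrow> real \<Rightarrow> bool" where
  "doubling_ok S \<delta> t \<longleftrightarrow> (\<forall>x\<in>S. \<forall>r>0. \<exists>C. finite C \<and> C \<subseteq> S \<and> real (card C) \<le> 2 powr t \<and>
      cball_in S \<delta> x r \<subseteq> (\<Union>c\<in>C. cball_in S \<delta> c (r / 2)))"

definition doubling_dim :: "'a set \<Rightarrow> ('a \<Rightarrow> 'a \<Rightarrow> real) \<Rightarrow> ereal" where
  "doubling_dim S \<delta> = Inf (ereal ` {t. t \<ge> 0 \<and> doubling_ok S \<delta> t})"

end

theory Submission
  imports Defs
begin


lemma trav_step: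
  assumes "is_traversal z l T" "Suc r < length T"
  shows "fst (T!r) \<le> fst (T!Suc r) \<and> fst (T!Suc r) \<le> Suc (fst (T!r)) \<and>
         snd (T!r) \<le> snd (T!Suc r) \<and> snd (T!Suc r) \<le> Suc (snd (T!r)) \<and> T!r \<noteq> T!Suc r"
proof -
  have "let (i, j) = T ! r; (i', j') = T ! Suc r in
          i \<le> i' \<and> i' \<le> Suc i \<and> j \<le> j' \<and> j' \<le> Suc j \<and> (i, j) \<noteq> (i', j')"
    using assms unfolding is_traversal_def by blast
  then show ?thesis by (cases "T!r", cases "T!Suc r") (auto simp: Let_def)
qed

lemma trav_first: "is_traversal z l T \<Longrightarrow> T ! 0 = (0,0) \<and> 0 < length T"
  unfolding is_traversal_def by (auto simp: hd_conv_nth)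

lemma trav_last: "is_traversal z l T \<Longrightarrow> T ! (length T - 1) = (z-1,l-1)"
  unfolding is_traversal_def by (auto simp: last_conv_nth)

lemma trav_mono:
  assumes "is_traversal z l T" "r \<le> s" "s < length T"
  shows "fst (T!r) \<le> fst (T!s) \<and> snd (T!r) \<le> snd (T!s)"
  using assms(2,3)
proof (induction s)
  case 0 then show ?case by simp
next
  case (Suc s)
  show ?case
  proof (cases "r = Suc s")
    case True then show ?thesis by simp
  next
    case False
    then have "r \<le> s" using Suc by simp
    with Suc trav_step[OF assms(1), of s] show ?thesis by auto
  qed
qed

lemma trav_sum:
  assumes "is_traversal z l T" "r < length T"
  shows "r \<le> fst (T!r) + snd (T!r)"
  using assms(2)
proof (induction r)
  case 0 then show ?case by simp
next
  case (Suc r)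
  with trav_step[OF assms(1), of r] show ?case
    by (cases "T!r", cases "T!Suc r") auto
qed

lemma trav_bounds:
  assumes "is_traversal z l T" "x \<in> set T"
  shows "fst x < max z 1 \<and> snd x < max l 1"
proof -
  obtain r where r: "r < length T" "x = T!r" using assms(2) by (auto simp: in_set_conv_nth)
  have "fst (T!r) \<le> fst (T!(length T - 1)) \<and> snd (T!r) \<le> snd (T!(length T - 1))"
    using trav_mono[OF assms(1), of r "length T - 1"] r by auto
  with trav_last[OF assms(1)] r show ?thesis by auto
qed

lemma trav_length:
  assumes "is_traversal z l T" "z \<ge> 1" "l \<ge> 1"
  shows "length T \<le> z + l - 1"
proof -
  have "length T - 1 \<le> fst (T!(length T - 1)) + snd (T!(length T - 1))"
    using trav_sum[OF assms(1), of "length T - 1"] trav_first[OF assms(1)] by auto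
  with trav_last[OF assms(1)] assms show ?thesis by auto
qed

lemma trav_finite:
  assumes "z \<ge> 1" "l \<ge> 1"
  shows "finite {T. is_traversal z l T}"
proof -
  have "{T. is_traversal z l T} \<subseteq> {xs. set xs \<subseteq> {..<z} \<times> {..<l} \<and> length xs \<le> z + l - 1}"
    using trav_bounds trav_length assms by fastforce
  moreover have "finite {xs. set xs \<subseteq> {..<z} \<times> {..<l} \<and> length xs \<le> z + l - 1}"
    by (rule finite_lists_length_le) auto
  ultimately show ?thesis by (rule finite_subset)
qed

lemma trav_cover_fst:
  assumes "is_traversal z l T" "i < z"
  shows "\<exists>j. (i,j) \<in> set T"
proof -
  have key: "\<forall>v \<le> fst (T!n). \<exists>r\<le>n. fst (T!r) = v" if "n < length T" for n
    using that
  proof (induction n)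
    case 0 then show ?case using trav_first[OF assms(1)] by auto
  next
    case (Suc n)
    show ?case
    proof (intro allI impI)
      fix v assume v: "v \<le> fst (T!Suc n)"
      show "\<exists>r\<le>Suc n. fst (T!r) = v"
      proof (cases "v \<le> fst (T!n)")
        case True then show ?thesis using Suc by (meson Suc_lessD le_Suc_eq)
      next
        case False
        with v trav_step[OF assms(1) Suc.prems] have "v = fst (T!Suc n)" by auto
        then show ?thesis by blast
      qed
    qed
  qed
  have "length T - 1 < length T" using trav_first[OF assms(1)] by auto
  have "i \<le> fst (T!(length T - 1))" using trav_last[OF assms(1)] assms(2) by simp
  then obtain r where r: "r \<le> length T - 1" "fst (T!r) = i"
    using key[OF \<open>length T - 1 < length T\<close>] by blast
  then have "r < length T" using \<open>length T - 1 < length T\<close> by linarith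
  then show ?thesis using r(2) by (metis nth_mem prod.collapse)
qed

lemma trav_cover_snd:
  assumes "is_traversal z l T" "j < l"
  shows "\<exists>i. (i,j) \<in> set T"
proof -
  have key: "\<forall>v \<le> snd (T!n). \<exists>r\<le>n. snd (T!r) = v" if "n < length T" for n
    using that
  proof (induction n)
    case 0 then show ?case using trav_first[OF assms(1)] by auto
  next
    case (Suc n)
    show ?case
    proof (intro allI impI)
      fix v assume v: "v \<le> snd (T!Suc n)"
      show "\<exists>r\<le>Suc n. snd (T!r) = v"
      proof (cases "v \<le> snd (T!n)")
        case True then show ?thesis using Suc by (meson Suc_lessD le_Suc_eq)
      next
        case False
        with v trav_step[OF assms(1) Suc.prems] have "v = snd (T!Suc n)" by auto
        then show ?thesis by blast
      qed
    qed
  qed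
  have "length T - 1 < length T" using trav_first[OF assms(1)] by auto
  have "j \<le> snd (T!(length T - 1))" using trav_last[OF assms(1)] assms(2) by simp
  then obtain r where r: "r \<le> length T - 1" "snd (T!r) = j"
    using key[OF \<open>length T - 1 < length T\<close>] by blast
  then have "r < length T" using \<open>length T - 1 < length T\<close> by linarith
  then show ?thesis using r(2) by (metis nth_mem prod.collapse)
qed

definition diagT :: "nat \<Rightarrow> (nat \<times> nat) list" where
  "diagT z = map (\<lambda>k. (k,k)) [0..<z]"

lemma diag_trav: "z \<ge> 1 \<Longrightarrow> is_traversal z z (diagT z)"
  unfolding is_traversal_def diagT_def
  by (auto simp: hd_map last_map nth_append Let_def)

definition tval :: "real list list \<Rightarrow> real list list \<Rightarrow> (nat \<times> nat) list \<Rightarrow> real" where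
  "tval P Q T = Max ((\<lambda>(i,j). euclid_dist (P!i) (Q!j)) ` set T)"

lemma dfrechet_alt:
  "dfrechet P Q = Min (tval P Q ` {T. is_traversal (length P) (length Q) T})"
proof -
  have "\<And>T. {euclid_dist (P ! i) (Q ! j) | i j. (i, j) \<in> set T} = (\<lambda>(i,j). euclid_dist (P!i) (Q!j)) ` set T"
    by force
  then show ?thesis unfolding dfrechet_def tval_def
    by (simp add: image_def setcompr_eq_image)
qed

lemma dfrechet_le_tval:
  assumes "is_traversal (length P) (length Q) T" "length P \<ge> 1" "length Q \<ge> 1"
  shows "dfrechet P Q \<le> tval P Q T"
  unfolding dfrechet_alt using assms trav_finite by (intro Min_le) auto

lemma dfrechet_attained:
  assumes "length P = z" "length Q = z" "z \<ge> 1"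
  shows "\<exists>T. is_traversal z z T \<and> dfrechet P Q = tval P Q T"
proof -
  have "finite (tval P Q ` {T. is_traversal z z T})" using trav_finite assms by auto
  moreover have "tval P Q ` {T. is_traversal z z T} \<noteq> {}" using diag_trav assms by auto
  ultimately have "Min (tval P Q ` {T. is_traversal z z T}) \<in> tval P Q ` {T. is_traversal z z T}"
    by (rule Min_in)
  then show ?thesis unfolding dfrechet_alt using assms by auto
qed

lemma tval_ge:
  assumes "T \<noteq> []" "(i,j) \<in> set T"
  shows "euclid_dist (P!i) (Q!j) \<le> tval P Q T"
  unfolding tval_def using assms by (intro Max_ge) force+

lemma tval_le:
  assumes "T \<noteq> []" "\<And>i j. (i,j) \<in> set T \<Longrightarrow> euclid_dist (P!i) (Q!j) \<le> c"
  shows "tval P Q T \<le> c"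
  unfolding tval_def using assms by (subst Max_le_iff) auto

lemma dfrechet_le_trav:
  assumes "length P = z" "length Q = z" "z \<ge> 1" "dfrechet P Q \<le> c"
  shows "\<exists>T. is_traversal z z T \<and> (\<forall>(i,j)\<in>set T. euclid_dist (P!i) (Q!j) \<le> c)"
proof -
  obtain T where T: "is_traversal z z T" "dfrechet P Q = tval P Q T"
    using dfrechet_attained assms by blast
  then have "T \<noteq> []" unfolding is_traversal_def by auto
  have "\<forall>(i,j)\<in>set T. euclid_dist (P!i) (Q!j) \<le> c"
    using T assms tval_ge[OF \<open>T \<noteq> []\<close>, of _ _ P Q] by fastforce
  then show ?thesis using T by blast
qed

lemma dfrechet_diag:
  assumes "length P = z" "length Q = z" "z \<ge> 1" "\<And>i. i < z \<Longrightarrow> euclid_dist (P!i) (Q!i) \<le> c"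
  shows "dfrechet P Q \<le> c"
proof -
  have "dfrechet P Q \<le> tval P Q (diagT z)"
    using dfrechet_le_tval diag_trav assms by auto
  also have "\<dots> \<le> c"
    using assms by (intro tval_le) (auto simp: diagT_def)
  finally show ?thesis .
qed

lemma euclid_dist_nonneg: "euclid_dist p q \<ge> 0"
  unfolding euclid_dist_def by (simp add: sum_nonneg)

lemma dfrechet_nonneg:
  assumes "length P = z" "length Q = z" "z \<ge> 1"
  shows "dfrechet P Q \<ge> 0"
proof -
  obtain T where T: "is_traversal z z T" "dfrechet P Q = tval P Q T"
    using dfrechet_attained assms by blast
  then have "T \<noteq> []" unfolding is_traversal_def by auto
  then obtain x where "x \<in> set T" by (cases T) auto
  then show ?thesis using T tval_ge[of T "fst x" "snd x" P Q] euclid_dist_nonneg \<open>T \<noteq> []\<close>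
    by (metis order_trans prod.collapse)
qed

lemma euclid_dist_self: "euclid_dist p p = 0"
  unfolding euclid_dist_def by simp

lemma dfrechet_refl:
  assumes "length P = z" "z \<ge> 1"
  shows "dfrechet P P = 0"
  using dfrechet_diag[OF assms(1) assms(1) assms(2), of 0] dfrechet_nonneg[OF assms(1) assms(1) assms(2)]
  by (simp add: euclid_dist_self)



lemma euclid_L2: "euclid_dist p q = L2_set (\<lambda>k. p!k - q!k) {..<length p}"
  unfolding euclid_dist_def L2_set_def by simp

lemma euclid_tri:
  assumes "length p = length q" "length q = length s"
  shows "euclid_dist p s \<le> euclid_dist p q + euclid_dist q s"
proof -
  have "euclid_dist p s = L2_set (\<lambda>k. (p!k - q!k) + (q!k - s!k)) {..<length p}"
    unfolding euclid_L2 by simp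
  also have "\<dots> \<le> L2_set (\<lambda>k. p!k - q!k) {..<length p} + L2_set (\<lambda>k. q!k - s!k) {..<length p}"
    by (rule L2_set_triangle_ineq)
  finally show ?thesis unfolding euclid_L2 using assms by simp
qed

lemma euclid_sym: "length p = length q \<Longrightarrow> euclid_dist p q = euclid_dist q p"
  unfolding euclid_dist_def by (simp add: power2_commute)

lemma euclid_coord:
  assumes "k < length p"
  shows "\<bar>p!k - q!k\<bar> \<le> euclid_dist p q"
proof -
  have "(p!k - q!k)^2 \<le> (\<Sum>i<length p. (p!i - q!i)^2)"
    using assms by (intro member_le_sum) auto
  then have "sqrt ((p!k - q!k)^2) \<le> euclid_dist p q"
    unfolding euclid_dist_def by (rule real_sqrt_le_mono)
  then show ?thesis by simp
qed

lemma euclid_zero: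
  assumes "length p = length q" "euclid_dist p q \<le> 0"
  shows "p = q"
proof -
  have s: "(\<Sum>i<length p. (p!i - q!i)^2) = 0"
    using assms(2) euclid_dist_nonneg[of p q] unfolding euclid_dist_def
    by (metis antisym real_sqrt_eq_zero_cancel_iff sum_nonneg zero_le_power2)
  have "\<forall>i\<in>{..<length p}. (p!i - q!i)^2 = 0"
    using sum_nonneg_eq_0_iff[THEN iffD1, OF _ _ s] by auto
  then show ?thesis using assms(1) by (intro nth_equalityI) auto
qed

lemma class_singleton:
  assumes W: "W \<in> curves d z" and z: "z \<ge> 1"
    and dist: "\<And>j. Suc j < z \<Longrightarrow> W!j \<noteq> W!Suc j"
  shows "{Q \<in> curves d z. dfrechet W Q = 0} = {W}"
proof
  show "{W} \<subseteq> {Q \<in> curves d z. dfrechet W Q = 0}"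
    using W dfrechet_refl[of W z] z unfolding curves_def by auto
next
  show "{Q \<in> curves d z. dfrechet W Q = 0} \<subseteq> {W}"
  proof
    fix Q assume Q: "Q \<in> {Q \<in> curves d z. dfrechet W Q = 0}"
    have lW: "length W = z" and lQ: "length Q = z" using W Q unfolding curves_def by auto
    obtain T where T: "is_traversal z z T" and Tc: "\<forall>(i,j)\<in>set T. euclid_dist (W!i) (Q!j) \<le> 0"
      using dfrechet_le_trav[OF lW lQ z, of 0] Q by auto
    have eq: "W!i = Q!j" if "(i,j) \<in> set T" for i j
    proof -
      have "i < z" "j < z" using trav_bounds[OF T that] z by auto
      then have "length (W!i) = d" "length (Q!j) = d" using W Q lW lQ unfolding curves_def
        by (auto simp: nth_mem)
      then show ?thesis using euclid_zero Tc that by fastforce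
    qed
    have len: "0 < length T" "T!0 = (0,0)" using trav_first[OF T] by auto
    have noi: "\<not> (fst (T!Suc r) = Suc (fst (T!r)) \<and> snd (T!Suc r) = snd (T!r))"
      if r: "Suc r < length T" for r
    proof
      assume a: "fst (T!Suc r) = Suc (fst (T!r)) \<and> snd (T!Suc r) = snd (T!r)"
      have m1: "T!r \<in> set T" "T!Suc r \<in> set T" using r by auto
      have "W!(fst (T!r)) = Q!(snd (T!r))" using eq[of "fst (T!r)" "snd (T!r)"] m1 by simp
      moreover have "W!(fst (T!Suc r)) = Q!(snd (T!Suc r))"
        using eq[of "fst (T!Suc r)" "snd (T!Suc r)"] m1 by simp
      moreover have "fst (T!Suc r) < z" using trav_bounds[OF T m1(2)] z by auto
      ultimately show False using dist[of "fst (T!r)"] a by simp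
    qed
    define D where "D r = int (snd (T!r)) - int (fst (T!r))" for r
    have Dmono: "D r \<le> D s" if "r \<le> s" "s < length T" for r s
      using that
    proof (induction s)
      case 0 then show ?case by simp
    next
      case (Suc s)
      show ?case
      proof (cases "r = Suc s")
        case True then show ?thesis by simp
      next
        case False
        then have "D r \<le> D s" using Suc by simp
        moreover have "D s \<le> D (Suc s)"
          using trav_step[OF T Suc.prems(2)] noi[OF Suc.prems(2)] unfolding D_def by auto
        ultimately show ?thesis by simp
      qed
    qed
    have D0: "D 0 = 0" using len unfolding D_def by simp
    have Dl: "D (length T - 1) = 0" using trav_last[OF T] unfolding D_def by simp
    have diagstep: "T!Suc r = (Suc (fst (T!r)), Suc (snd (T!r)))" if r: "Suc r < length T" for r
    proof -
      have "D r = 0" using Dmono[of 0 r] Dmono[of r "length T - 1"] D0 Dl r by simp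
      moreover have "D (Suc r) = 0" using Dmono[of 0 "Suc r"] Dmono[of "Suc r" "length T - 1"] D0 Dl r by simp
      ultimately show ?thesis using trav_step[OF T r] noi[OF r] unfolding D_def
        by (cases "T!r", cases "T!Suc r") auto
    qed
    have Tr: "T!r = (r,r)" if "r < length T" for r
      using that
    proof (induction r)
      case 0 then show ?case using len by simp
    next
      case (Suc r) then show ?case using diagstep[OF Suc.prems] by simp
    qed
    have "length T - 1 = z - 1" using trav_last[OF T] Tr[of "length T - 1"] len by simp
    then have lT: "length T = z" using len z by linarith
    have "W!k = Q!k" if "k < z" for k
      using eq[of k k] Tr[of k] that lT by (metis nth_mem)
    then show "Q \<in> {W}" using lW lQ by (auto intro: nth_equalityI)
  qed
qed



lemma binom_tail:
  fixes d m :: nat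
  shows "real (\<Sum>k\<le>m. d choose k) \<le> 3^m * (4/3)^d"
proof -
  have "real (\<Sum>k\<le>m. d choose k) = (\<Sum>k\<le>m. real (d choose k))" by simp
  also have "\<dots> \<le> (\<Sum>k\<le>m. real (d choose k) * (3^m * (1/3)^k))"
  proof (intro sum_mono)
    fix k assume "k \<in> {..m}"
    then have "(3::real)^k \<le> 3^m" by (intro power_increasing) auto
    then have "1 \<le> (3::real)^m * (1/3)^k" by (simp add: power_one_over field_simps)
    then show "real (d choose k) \<le> real (d choose k) * (3^m * (1/3)^k)"
      by (metis mult.right_neutral mult_left_mono of_nat_0_le_iff)
  qed
  also have "\<dots> = 3^m * (\<Sum>k\<le>m. real (d choose k) * (1/3)^k)"
    by (simp add: sum_distrib_left algebra_simps)
  also have "(\<Sum>k\<le>m. real (d choose k) * (1/3)^k) \<le> (\<Sum>k\<le>max m d. real (d choose k) * (1/3)^k)"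
    by (intro sum_mono2) auto
  also have "\<dots> = (\<Sum>k\<le>d. real (d choose k) * (1/3)^k)"
  proof (cases "m \<le> d")
    case True then show ?thesis by (simp add: max_def)
  next
    case False
    then have "(\<Sum>k\<le>max m d. real (d choose k) * (1/3)^k) = (\<Sum>k\<le>d. real (d choose k) * (1/3)^k)"
      by (intro sum.mono_neutral_right) auto
    then show ?thesis .
  qed
  also have "\<dots> = (1/3 + 1)^d"
    by (subst binomial_ring) simp
  also have "(1/3 + 1::real) = 4/3" by simp
  finally show ?thesis by simp
qed

lemma card_small_subsets:
  "card {B. B \<subseteq> {..<d} \<and> card B \<le> m} \<le> (\<Sum>k\<le>m. d choose k)"
proof -
  have "{B. B \<subseteq> {..<d} \<and> card B \<le> m} = (\<Union>k\<in>{..m}. {B. B \<subseteq> {..<d} \<and> card B = k})"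
    by auto
  then have "card {B. B \<subseteq> {..<d} \<and> card B \<le> m} \<le> (\<Sum>k\<le>m. card {B. B \<subseteq> {..<d} \<and> card B = k})"
    by (simp add: card_UN_le)
  also have "\<dots> = (\<Sum>k\<le>m. d choose k)" by (simp add: n_subsets)
  finally show ?thesis .
qed

definition Hcube :: "nat \<Rightarrow> (nat \<Rightarrow> bool) set" where
  "Hcube d = {..<d} \<rightarrow>\<^sub>E (UNIV :: bool set)"

definition ham :: "nat \<Rightarrow> (nat \<Rightarrow> bool) \<Rightarrow> (nat \<Rightarrow> bool) \<Rightarrow> nat" where
  "ham d x y = card {k\<in>{..<d}. x k \<noteq> y k}"

definition Hball :: "nat \<Rightarrow> (nat \<Rightarrow> bool) \<Rightarrow> (nat \<Rightarrow> bool) set" where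
  "Hball d x = {y \<in> Hcube d. 4 * ham d x y \<le> d}"

lemma finite_Hcube: "finite (Hcube d)"
  unfolding Hcube_def by (intro finite_PiE) auto

lemma card_Hcube: "card (Hcube d) = 2^d"
  unfolding Hcube_def by (simp add: card_PiE)

lemma card_Hball: "real (card (Hball d x)) \<le> 3^(d div 4) * (4/3)^d"
proof -
  let ?phi = "\<lambda>y. {k\<in>{..<d}. x k \<noteq> y k}"
  have inj: "inj_on ?phi (Hball d x)"
  proof
    fix y y' assume y: "y \<in> Hball d x" and y': "y' \<in> Hball d x" and e: "?phi y = ?phi y'"
    have "y k = y' k" for k
    proof (cases "k < d")
      case True
      then have "(x k \<noteq> y k) = (x k \<noteq> y' k)" using e by blast
      then show ?thesis by auto
    next
      case False
      then show ?thesis using y y' unfolding Hball_def Hcube_def by (auto simp: PiE_def extensional_def)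
    qed
    then show "y = y'" by auto
  qed
  have sub: "?phi ` Hball d x \<subseteq> {B. B \<subseteq> {..<d} \<and> card B \<le> d div 4}"
    unfolding Hball_def ham_def by auto
  have "card (Hball d x) = card (?phi ` Hball d x)" using inj by (simp add: card_image)
  also have "\<dots> \<le> card {B. B \<subseteq> {..<d} \<and> card B \<le> d div 4}"
    by (intro card_mono sub) auto
  also have "\<dots> \<le> (\<Sum>k\<le>d div 4. d choose k)" by (rule card_small_subsets)
  finally have "real (card (Hball d x)) \<le> real (\<Sum>k\<le>d div 4. d choose k)" by linarith
  also have "\<dots> \<le> 3^(d div 4) * (4/3)^d" by (rule binom_tail)
  finally show ?thesis .
qed

lemma Hball_pow4: "real (card (Hball d x))^4 \<le> (256/27)^d"
proof -
  have "real (card (Hball d x))^4 \<le> (3^(d div 4) * (4/3)^d)^4"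
    using card_Hball[of d x] by (intro power_mono) auto
  also have "\<dots> = 3^(4 * (d div 4)) * ((4/3)^4)^d"
    by (simp add: power_mult_distrib power_mult[symmetric] mult.commute)
  also have "\<dots> \<le> 3^d * ((4/3)^4)^d"
    by (intro mult_right_mono power_increasing) auto
  also have "\<dots> = (3 * (4/3)^4)^d" by (simp add: power_mult_distrib)
  also have "(3 * (4/3)^4::real) = 256/27" by (simp add: power_divide)
  finally show ?thesis .
qed



definition sv :: "nat \<Rightarrow> bool \<Rightarrow> real" where
  "sv d b = (if b then 1 / sqrt (real d) else - (1 / sqrt (real d)))"

definition lpt :: "nat \<Rightarrow> nat \<Rightarrow> (nat \<Rightarrow> bool) \<Rightarrow> real list" where
  "lpt d i s = map (\<lambda>k. (if k = 0 then 10 * real i else 0) + sv d (s k)) [0..<d]"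

definition lbase :: "nat \<Rightarrow> nat \<Rightarrow> real list" where
  "lbase d i = map (\<lambda>k. if k = 0 then 10 * real i else 0) [0..<d]"

definition lP :: "nat \<Rightarrow> nat \<Rightarrow> real list list" where
  "lP d z = map (lbase d) [0..<z]"

definition lsig :: "nat \<Rightarrow> nat \<Rightarrow> (nat \<Rightarrow> nat \<Rightarrow> bool) \<Rightarrow> real list list" where
  "lsig d z \<sigma> = map (\<lambda>i. lpt d i (\<sigma> i)) [0..<z]"

lemma sv_abs: "d \<ge> 1 \<Longrightarrow> \<bar>sv d b\<bar> \<le> 1"
  unfolding sv_def by auto

lemma sv_sq: "d \<ge> 1 \<Longrightarrow> (sv d b)^2 = 1 / real d"
  unfolding sv_def by (auto simp: power_divide)

lemma sv_diff_sq: "d \<ge> 1 \<Longrightarrow> (sv d b - sv d b')^2 = (if b \<noteq> b' then 4 / real d else 0)"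
  unfolding sv_def by (auto simp: power2_eq_square field_simps)

lemma lP_curves: "lP d z \<in> curves d z"
  unfolding lP_def lbase_def curves_def by auto

lemma lsig_curves: "lsig d z \<sigma> \<in> curves d z"
  unfolding lsig_def lpt_def curves_def by auto

lemma lP_distinct: "d \<ge> 1 \<Longrightarrow> Suc j < z \<Longrightarrow> lP d z ! j \<noteq> lP d z ! Suc j"
proof
  assume d: "d \<ge> 1" and j: "Suc j < z" and e: "lP d z ! j = lP d z ! Suc j"
  then have "lP d z ! j ! 0 = lP d z ! Suc j ! 0" by simp
  then show False using d j unfolding lP_def lbase_def by simp
qed

lemma lsig_coord0: "d \<ge> 1 \<Longrightarrow> i < z \<Longrightarrow> lsig d z \<sigma> ! i ! 0 = 10 * real i + sv d (\<sigma> i 0)"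
  unfolding lsig_def lpt_def by simp

lemma lsig_far:
  assumes d: "d \<ge> 1" and i: "i < z" and j: "j < z" and ij: "i \<noteq> j"
  shows "euclid_dist (lsig d z \<sigma> ! i) (lsig d z \<tau> ! j) > 1"
proof -
  have "\<bar>lsig d z \<sigma> ! i ! 0 - lsig d z \<tau> ! j ! 0\<bar> \<le> euclid_dist (lsig d z \<sigma> ! i) (lsig d z \<tau> ! j)"
    using d i by (intro euclid_coord) (auto simp: lsig_def lpt_def)
  moreover have "\<bar>lsig d z \<sigma> ! i ! 0 - lsig d z \<tau> ! j ! 0\<bar> > 1"
  proof -
    have a: "\<bar>sv d (\<sigma> i 0)\<bar> \<le> 1" "\<bar>sv d (\<tau> j 0)\<bar> \<le> 1" using sv_abs d by auto
    have "\<bar>10 * real i - 10 * real j\<bar> \<ge> 10" using ij by (cases "i < j") auto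
    then show ?thesis using a lsig_coord0[OF d i] lsig_coord0[OF d j] by auto
  qed
  ultimately show ?thesis by linarith
qed

lemma lsig_distinct: "d \<ge> 1 \<Longrightarrow> Suc j < z \<Longrightarrow> lsig d z \<sigma> ! j \<noteq> lsig d z \<sigma> ! Suc j"
  using lsig_far[of d j z "Suc j" \<sigma> \<sigma>] euclid_dist_self by fastforce

lemma lP_lsig_dist: "d \<ge> 1 \<Longrightarrow> i < z \<Longrightarrow> euclid_dist (lP d z ! i) (lsig d z \<sigma> ! i) = 1"
  unfolding euclid_dist_def lP_def lsig_def lbase_def lpt_def
  by (simp add: sv_sq)

lemma lsig_same_dist:
  assumes d: "d \<ge> 1" and i: "i < z"
  shows "(euclid_dist (lsig d z \<sigma> ! i) (lsig d z \<tau> ! i))^2 = 4 * real (ham d (\<sigma> i) (\<tau> i)) / real d"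
proof -
  have "(euclid_dist (lsig d z \<sigma> ! i) (lsig d z \<tau> ! i))^2 = (\<Sum>k<d. (sv d (\<sigma> i k) - sv d (\<tau> i k))^2)"
    unfolding euclid_dist_def lsig_def lpt_def using i by (simp add: sum_nonneg)
  also have "\<dots> = (\<Sum>k<d. if \<sigma> i k \<noteq> \<tau> i k then 4 / real d else 0)"
    using d by (simp add: sv_diff_sq)
  also have "\<dots> = (\<Sum>k\<in>{k\<in>{..<d}. \<sigma> i k \<noteq> \<tau> i k}. 4 / real d)"
    by (rule sum.inter_filter[symmetric]) simp
  also have "\<dots> = 4 * real (ham d (\<sigma> i) (\<tau> i)) / real d"
    unfolding ham_def by simp
  finally show ?thesis .
qed

lemma key_pair:
  assumes d: "d \<ge> 1" and z: "z \<ge> 1" and W: "W \<in> curves d z"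
    and h1: "dfrechet W (lsig d z \<sigma>) \<le> 1/2" and h2: "dfrechet W (lsig d z \<tau>) \<le> 1/2"
    and i: "i < z"
  shows "4 * ham d (\<sigma> i) (\<tau> i) \<le> d"
proof -
  have lW: "length W = z" using W unfolding curves_def by auto
  have l1: "length (lsig d z \<sigma>) = z" "length (lsig d z \<tau>) = z" unfolding lsig_def by auto
  obtain T1 where T1: "is_traversal z z T1" "\<forall>(a,b)\<in>set T1. euclid_dist (W!a) (lsig d z \<sigma> ! b) \<le> 1/2"
    using dfrechet_le_trav[OF lW l1(1) z h1] by blast
  obtain T2 where T2: "is_traversal z z T2" "\<forall>(a,b)\<in>set T2. euclid_dist (W!a) (lsig d z \<tau> ! b) \<le> 1/2"
    using dfrechet_le_trav[OF lW l1(2) z h2] by blast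
  obtain a where a: "(a,i) \<in> set T1" using trav_cover_snd[OF T1(1) i] by blast
  have az: "a < z" using trav_bounds[OF T1(1) a] z by auto
  obtain j where j: "(a,j) \<in> set T2" using trav_cover_fst[OF T2(1) az] by blast
  have jz: "j < z" using trav_bounds[OF T2(1) j] z by auto
  have e1: "euclid_dist (W!a) (lsig d z \<sigma> ! i) \<le> 1/2" using T1(2) a by auto
  have e2: "euclid_dist (W!a) (lsig d z \<tau> ! j) \<le> 1/2" using T2(2) j by auto
  have lens: "length (W!a) = d" "length (lsig d z \<sigma> ! i) = d" "length (lsig d z \<tau> ! j) = d"
    using W az i jz unfolding curves_def lsig_def lpt_def by (auto simp: lW)
  have "euclid_dist (lsig d z \<sigma> ! i) (lsig d z \<tau> ! j)
        \<le> euclid_dist (lsig d z \<sigma> ! i) (W!a) + euclid_dist (W!a) (lsig d z \<tau> ! j)"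
    using lens by (intro euclid_tri) auto
  also have "euclid_dist (lsig d z \<sigma> ! i) (W!a) = euclid_dist (W!a) (lsig d z \<sigma> ! i)"
    using lens by (intro euclid_sym) auto
  finally have e: "euclid_dist (lsig d z \<sigma> ! i) (lsig d z \<tau> ! j) \<le> 1" using e1 e2 by linarith
  then have "j = i" using lsig_far[OF d i jz, of \<sigma> \<tau>] by (metis not_less)
  then have "(euclid_dist (lsig d z \<sigma> ! i) (lsig d z \<tau> ! i))^2 \<le> 1"
    using e euclid_dist_nonneg by (metis power_le_one)
  then have "4 * real (ham d (\<sigma> i) (\<tau> i)) / real d \<le> 1"
    using lsig_same_dist[OF d i] by simp
  then have "4 * real (ham d (\<sigma> i) (\<tau> i)) \<le> real d" using d by (simp add: divide_le_eq)
  then show ?thesis by linarith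
qed



lemma arith_lower:
  fixes X :: real and N :: nat
  assumes X: "X > 0" and h: "2^N \<le> X * (256/27) powr (real N / 4)"
  shows "2^N \<le> X^8"
proof -
  define K where "K = (256/27::real) powr (real N / 4)"
  have K0: "K > 0" unfolding K_def by simp
  have "(2^N)^8 \<le> (X * K)^8" using h unfolding K_def by (intro power_mono) auto
  moreover have "((2::real)^N)^8 = 256^N"
    by (simp only: power_mult[symmetric] mult.commute[of N 8]) (simp add: power_mult)
  ultimately have a: "256^N \<le> X^8 * K^8"
    by (simp add: power_mult_distrib)
  have "K^8 = K powr (real 8)" using K0 by (simp only: powr_realpow)
  also have "\<dots> = (256/27::real) powr (real N / 4 * 8)"
    unfolding K_def by (simp add: powr_powr)
  also have "\<dots> = (256/27::real) powr (real (2*N))" by simp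
  also have "\<dots> = (256/27::real)^(2*N)" using powr_realpow[of "256/27::real" "2*N"] by simp
  also have "\<dots> = ((256/27)^2)^N" by (simp add: power_mult)
  finally have K8: "K^8 = ((256/27::real)^2)^N" .
  have "(729/256::real)^N * ((256/27)^2)^N = ((729/256) * (256/27)^2)^N"
    by (simp only: power_mult_distrib)
  also have "(729/256::real) * (256/27)^2 = 256" by (simp add: power2_eq_square)
  finally have "(729/256::real)^N * ((256/27)^2)^N = 256^N" .
  with a K8 have "(729/256::real)^N * ((256/27)^2)^N \<le> X^8 * ((256/27)^2)^N" by simp
  then have "(729/256::real)^N \<le> X^8" by (simp add: mult_le_cancel_right)
  moreover have "(2::real)^N \<le> (729/256)^N" by (intro power_mono) auto
  ultimately show ?thesis by linarith
qed

definition cls :: "nat \<Rightarrow> nat \<Rightarrow> real list list \<Rightarrow> real list list set" where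
  "cls d z P = {Q \<in> curves d z. dfrechet P Q = 0}"

lemma cls_in: "P \<in> curves d z \<Longrightarrow> cls d z P \<in> frechet_classes d z"
  unfolding cls_def frechet_classes_def by auto

lemma class_rep:
  assumes "c \<in> frechet_classes d z" "z \<ge> 1"
  shows "(SOME P. P \<in> c) \<in> c" "c \<subseteq> curves d z"
proof -
  obtain P where P: "P \<in> curves d z" "c = {Q \<in> curves d z. dfrechet P Q = 0}"
    using assms unfolding frechet_classes_def by auto
  have "P \<in> c" using P dfrechet_refl[of P z] assms unfolding curves_def by auto
  then show "(SOME P. P \<in> c) \<in> c" by (rule someI)
  show "c \<subseteq> curves d z" using P by auto
qed

lemma lower_bound:
  assumes d: "d \<ge> 1" and z: "z \<ge> 1"
    and ok: "doubling_ok (frechet_classes d z) class_dist t"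
  shows "real d * real z / 8 \<le> t"
proof -
  let ?S = "frechet_classes d z"
  define A where "A = cls d z (lP d z)"
  have A: "A = {lP d z}" unfolding A_def cls_def
    using class_singleton[OF lP_curves z lP_distinct[OF d]] by simp
  have AS: "A \<in> ?S" unfolding A_def by (rule cls_in[OF lP_curves])
  define B where "B \<sigma> = cls d z (lsig d z \<sigma>)" for \<sigma>
  have B: "B \<sigma> = {lsig d z \<sigma>}" for \<sigma> unfolding B_def cls_def
    using class_singleton[OF lsig_curves z lsig_distinct[OF d]] by simp
  have BS: "B \<sigma> \<in> ?S" for \<sigma> unfolding B_def by (rule cls_in[OF lsig_curves])
  obtain C where C: "finite C" "C \<subseteq> ?S" "real (card C) \<le> 2 powr t"
    "cball_in ?S class_dist A 1 \<subseteq> (\<Union>c\<in>C. cball_in ?S class_dist c (1/2))"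
    using ok AS unfolding doubling_ok_def by (meson zero_less_one)
  define Sig where "Sig = PiE {..<z} (\<lambda>_. Hcube d)"
  define F where "F c = {\<sigma>\<in>Sig. dfrechet (SOME P. P \<in> c) (lsig d z \<sigma>) \<le> 1/2}" for c
  have finSig: "finite Sig" unfolding Sig_def by (intro finite_PiE finite_Hcube) auto
  have cardSig: "card Sig = 2^(d*z)" unfolding Sig_def
    by (simp add: card_PiE card_Hcube power_mult)
  have cover: "Sig \<subseteq> (\<Union>c\<in>C. F c)"
  proof
    fix \<sigma> assume s: "\<sigma> \<in> Sig"
    have "class_dist A (B \<sigma>) = dfrechet (lP d z) (lsig d z \<sigma>)"
      unfolding class_dist_def A B by simp
    also have "\<dots> \<le> 1" using lP_lsig_dist[OF d] z
      by (intro dfrechet_diag[of _ z]) (auto simp: lP_def lsig_def)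
    finally have "B \<sigma> \<in> cball_in ?S class_dist A 1" unfolding cball_in_def using BS by auto
    then obtain c where c: "c \<in> C" "class_dist c (B \<sigma>) \<le> 1/2" using C(4) unfolding cball_in_def by blast
    then have "dfrechet (SOME P. P \<in> c) (lsig d z \<sigma>) \<le> 1/2" unfolding class_dist_def B by simp
    then show "\<sigma> \<in> (\<Union>c\<in>C. F c)" using c s unfolding F_def by auto
  qed
  define K where "K = (256/27::real) powr (real (d*z) / 4)"
  have Fb: "real (card (F c)) \<le> K" if cC: "c \<in> C" for c
  proof (cases "F c = {}")
    case True then show ?thesis unfolding K_def by simp
  next
    case False
    then obtain \<sigma>0 where s0: "\<sigma>0 \<in> F c" by blast
    define W where "W = (SOME P. P \<in> c)"
    have W: "W \<in> curves d z" using class_rep[of c d z] C(2) cC z unfolding W_def by blast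
    have sub: "F c \<subseteq> PiE {..<z} (\<lambda>i. Hball d (\<sigma>0 i))"
    proof
      fix \<sigma> assume s: "\<sigma> \<in> F c"
      have "4 * ham d (\<sigma>0 i) (\<sigma> i) \<le> d" if "i < z" for i
        using key_pair[OF d z W _ _ that, of \<sigma>0 \<sigma>] s s0 unfolding F_def W_def by auto
      then show "\<sigma> \<in> PiE {..<z} (\<lambda>i. Hball d (\<sigma>0 i))"
        using s unfolding F_def Sig_def Hball_def by (auto simp: PiE_def Pi_def)
    qed
    have "card (F c) \<le> card (PiE {..<z} (\<lambda>i. Hball d (\<sigma>0 i)))"
      by (intro card_mono sub finite_PiE) (auto simp: Hball_def intro: finite_subset[OF _ finite_Hcube])
    also have "\<dots> = (\<Prod>i<z. card (Hball d (\<sigma>0 i)))" by (simp add: card_PiE)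
    finally have "real (card (F c)) \<le> (\<Prod>i<z. real (card (Hball d (\<sigma>0 i))))"
      by (metis of_nat_le_iff of_nat_prod)
    then have "real (card (F c))^4 \<le> (\<Prod>i<z. real (card (Hball d (\<sigma>0 i))))^4"
      by (intro power_mono) auto
    also have "\<dots> = (\<Prod>i<z. real (card (Hball d (\<sigma>0 i)))^4)" by (simp add: prod_power_distrib)
    also have "\<dots> \<le> (\<Prod>i<z. (256/27::real)^d)"
      by (intro prod_mono) (auto simp: Hball_pow4)
    also have "\<dots> = K^4"
    proof -
      have "K^4 = K powr (real 4)" by (simp only: powr_realpow[of K] K_def) simp
      also have "\<dots> = (256/27::real) powr (real (d*z) / 4 * 4)" unfolding K_def by (simp add: powr_powr)
      also have "\<dots> = (256/27::real)^(d*z)" using powr_realpow[of "256/27::real" "d*z"] by simp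
      also have "\<dots> = (\<Prod>i<z. (256/27::real)^d)" by (simp add: power_mult)
      finally show ?thesis by simp
    qed
    finally have "real (card (F c)) ^ 4 \<le> K ^ 4" .
    then show ?thesis
      using power_mono_iff[of "real (card (F c))" K 4] by (auto simp: K_def)
  qed
  have "card Sig \<le> card (\<Union>c\<in>C. F c)"
    using cover by (intro card_mono) (auto simp: F_def finSig C(1))
  also have "\<dots> \<le> (\<Sum>c\<in>C. card (F c))" by (rule card_UN_le[OF C(1)])
  finally have "real (card Sig) \<le> (\<Sum>c\<in>C. real (card (F c)))" by (metis of_nat_le_iff of_nat_sum)
  also have "\<dots> \<le> (\<Sum>c\<in>C. K)" using Fb by (intro sum_mono) auto
  also have "\<dots> = real (card C) * K" by simp
  also have "\<dots> \<le> 2 powr t * K" using C(3) by (intro mult_right_mono) (auto simp: K_def)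
  finally have "2^(d*z) \<le> 2 powr t * (256/27::real) powr (real (d*z) / 4)"
    unfolding K_def cardSig by simp
  then have "2^(d*z) \<le> (2 powr t)^8" by (intro arith_lower) auto
  moreover have "(2 powr t)^8 = 2 powr (8 * t)"
  proof -
    have "(2 powr t)^8 = (2 powr t) powr (real 8)" using powr_realpow[of "2 powr t" 8] by simp
    also have "\<dots> = 2 powr (8 * t)" by (simp add: powr_powr mult.commute)
    finally show ?thesis .
  qed
  moreover have "(2::real)^(d*z) = 2 powr (real (d*z))" using powr_realpow[of "2::real" "d*z"] by simp
  ultimately have "2 powr (real (d*z)) \<le> 2 powr (8 * t)" by simp
  then have "real (d*z) \<le> 8 * t" by simp
  then show ?thesis by simp
qed



lemma strict_inc_lt:
  fixes g :: "nat \<Rightarrow> nat"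
  assumes "\<And>k. Suc k < n \<Longrightarrow> g k < g (Suc k)" "i < j" "j < n"
  shows "g i < g j"
  using assms(2,3)
proof (induction j)
  case 0 then show ?case by simp
next
  case (Suc j)
  show ?case
  proof (cases "i = j")
    case True then show ?thesis using assms(1) Suc by simp
  next
    case False
    then have "g i < g j" using Suc by simp
    also have "g j < g (Suc j)" using assms(1) Suc by simp
    finally show ?thesis .
  qed
qed

lemma strict_image_inj:
  fixes g g' :: "nat \<Rightarrow> nat"
  assumes g: "\<And>k. Suc k < n \<Longrightarrow> g k < g (Suc k)" and g': "\<And>k. Suc k < n \<Longrightarrow> g' k < g' (Suc k)"
    and e: "g ` {..<n} = g' ` {..<n}" and k: "k < n"
  shows "g k = g' k"
proof -
  have sl: "sorted_list_of_set (h ` {..<n}) = map h [0..<n]"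
    if h: "\<And>k. Suc k < n \<Longrightarrow> h k < h (Suc k)" for h :: "nat \<Rightarrow> nat"
  proof -
    have lt: "h i < h j" if "i < j" "j < n" for i j using strict_inc_lt[of n h i j] h that by blast
    have s: "sorted (map h [0..<n])"
      unfolding sorted_iff_nth_mono by (auto simp: le_less dest: lt)
    have dd: "distinct (map h [0..<n])"
      unfolding distinct_conv_nth by (auto simp: nat_neq_iff dest: lt)
    have "h ` {..<n} = set (map h [0..<n])" by auto
    then have "sorted_list_of_set (h ` {..<n}) = sorted_list_of_set (set (map h [0..<n]))" by (simp only:)
    also have "\<dots> = sort (remdups (map h [0..<n]))" by (rule sorted_list_of_set_sort_remdups)
    also have "\<dots> = map h [0..<n]" using s dd by (simp add: distinct_remdups_id sorted_sort_id)
    finally show ?thesis .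
  qed
  have "map g [0..<n] = map g' [0..<n]" using sl[of g] sl[of g'] g g' e by metis
  then show ?thesis using k by (metis diff_zero length_map length_upt nth_map_upt add_0)
qed

definition Fm :: "nat \<Rightarrow> (nat \<Rightarrow> nat) set" where
  "Fm z = {f \<in> {..<z} \<rightarrow>\<^sub>E {..<z}. \<forall>j. Suc j < z \<longrightarrow> f j \<le> f (Suc j)}"

lemma finite_Fm: "finite (Fm z)"
  unfolding Fm_def by (rule finite_subset[of _ "{..<z} \<rightarrow>\<^sub>E {..<z}"]) (auto intro: finite_PiE)

lemma card_Fm: "card (Fm z) \<le> 4^z"
proof -
  let ?phi = "\<lambda>f. (\<lambda>j. f j + j) ` {..<z}"
  have inj: "inj_on ?phi (Fm z)"
  proof
    fix f f' assume f: "f \<in> Fm z" and f': "f' \<in> Fm z" and e: "?phi f = ?phi f'"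
    have "f j + j = f' j + j" if "j < z" for j
      using strict_image_inj[of z "\<lambda>j. f j + j" "\<lambda>j. f' j + j", OF _ _ e that] f f'
      unfolding Fm_def by force
    then show "f = f'" using f f' unfolding Fm_def by (intro PiE_ext[of f "{..<z}" "\<lambda>_. {..<z}"]) auto
  qed
  have "?phi ` Fm z \<subseteq> Pow {..<2*z}" unfolding Fm_def by (auto simp: PiE_def Pi_def)
  then have "card (?phi ` Fm z) \<le> card (Pow {..<2*z})" by (intro card_mono) auto
  then have "card (Fm z) \<le> 2^(2*z)" using inj by (simp add: card_image card_Pow)
  then show ?thesis by (simp add: power_mult)
qed

definition Ncomp :: "nat \<Rightarrow> (nat \<Rightarrow> nat) set" where
  "Ncomp d = {n \<in> {..<d} \<rightarrow>\<^sub>E {..2*d}. (\<Sum>k<d. n k) \<le> 2*d}"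

lemma finite_Ncomp: "finite (Ncomp d)"
  unfolding Ncomp_def by (rule finite_subset[of _ "{..<d} \<rightarrow>\<^sub>E {..2*d}"]) (auto intro: finite_PiE)

lemma card_Ncomp: "card (Ncomp d) \<le> 8^d"
proof -
  let ?g = "\<lambda>n k. k + (\<Sum>l\<le>k. n l)"
  let ?phi = "\<lambda>n. ?g n ` {..<d}"
  have gs: "?g n k < ?g n (Suc k)" for n k by simp
  have inj: "inj_on ?phi (Ncomp d)"
  proof
    fix n n' assume n: "n \<in> Ncomp d" and n': "n' \<in> Ncomp d" and e: "?phi n = ?phi n'"
    have ge: "?g n k = ?g n' k" if "k < d" for k
      using strict_image_inj[of d "?g n" "?g n'", OF _ _ e that] by simp
    have "n k = n' k" if "k < d" for k
      using that
    proof (induction k)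
      case 0 then show ?case using ge[of 0] by simp
    next
      case (Suc k)
      have a: "sum n {..Suc k} = sum n' {..Suc k}" using ge[of "Suc k"] Suc.prems by simp
      have b: "sum n {..k} = sum n' {..k}" using ge[of k] Suc.prems by simp
      show ?case using a b by (simp add: sum.atMost_Suc)
    qed
    then show "n = n'" using n n' unfolding Ncomp_def by (intro PiE_ext[of n "{..<d}" "\<lambda>_. {..2*d}"]) auto
  qed
  have "?phi ` Ncomp d \<subseteq> Pow {..<3*d}"
  proof
    fix S assume "S \<in> ?phi ` Ncomp d"
    then obtain n where n: "n \<in> Ncomp d" and S: "S = ?phi n" by blast
    have "?g n k < 3*d" if "k < d" for k
    proof -
      have "(\<Sum>l\<le>k. n l) \<le> (\<Sum>l<d. n l)" using that by (intro sum_mono2) auto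
      then show ?thesis using n that unfolding Ncomp_def by simp
    qed
    then show "S \<in> Pow {..<3*d}" using S by auto
  qed
  then have "card (?phi ` Ncomp d) \<le> card (Pow {..<3*d})" by (intro card_mono) auto
  then have "card (Ncomp d) \<le> 2^(3*d)" using inj by (simp add: card_image card_Pow)
  then show ?thesis by (simp add: power_mult)
qed

definition Mset :: "nat \<Rightarrow> (nat \<Rightarrow> int) set" where
  "Mset d = {..<d} \<rightarrow>\<^sub>E {-3..3}"

lemma finite_Mset: "finite (Mset d)"
  unfolding Mset_def by (auto intro: finite_PiE)

lemma card_Mset: "card (Mset d) = 7^d"
  unfolding Mset_def by (simp add: card_PiE)

definition Net :: "nat \<Rightarrow> ((nat \<Rightarrow> nat) \<times> (nat \<Rightarrow> int)) set" where
  "Net d = Ncomp d \<times> Mset d"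

definition Nets :: "nat \<Rightarrow> nat \<Rightarrow> (nat \<Rightarrow> (nat \<Rightarrow> nat) \<times> (nat \<Rightarrow> int)) set" where
  "Nets d z = PiE {..<z} (\<lambda>_. Net d)"

definition Bits :: "nat \<Rightarrow> (nat \<Rightarrow> bool) set" where
  "Bits z = {..<z} \<rightarrow>\<^sub>E (UNIV :: bool set)"

lemma finite_Net: "finite (Net d)"
  unfolding Net_def using finite_Ncomp finite_Mset by auto

lemma card_Net: "card (Net d) \<le> 56^d"
proof -
  have "card (Net d) = card (Ncomp d) * 7^d" unfolding Net_def by (simp add: card_cartesian_product card_Mset)
  also have "\<dots> \<le> 8^d * 7^d" using card_Ncomp by simp
  also have "\<dots> = 56^d" by (simp add: power_mult_distrib[symmetric])
  finally show ?thesis .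
qed

lemma finite_Nets: "finite (Nets d z)"
  unfolding Nets_def using finite_Net by (auto intro: finite_PiE)

lemma card_Nets: "card (Nets d z) \<le> 56^(d*z)"
proof -
  have "card (Nets d z) = card (Net d)^z" unfolding Nets_def by (simp add: card_PiE)
  also have "\<dots> \<le> (56^d)^z" using card_Net by (intro power_mono) auto
  finally show ?thesis by (simp add: power_mult)
qed

lemma finite_Bits: "finite (Bits z)"
  unfolding Bits_def by (auto intro: finite_PiE)

lemma card_Bits: "card (Bits z) = 2^z"
  unfolding Bits_def by (simp add: card_PiE)

lemma card_params:
  assumes "d \<ge> 1"
  shows "card (Fm z \<times> Nets d z \<times> Bits z) \<le> 2^(9*d*z)"
proof -
  have "card (Fm z \<times> Nets d z \<times> Bits z) = card (Fm z) * card (Nets d z) * 2^z"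
    by (simp add: card_cartesian_product card_Bits)
  also have "\<dots> \<le> 4^z * 56^(d*z) * 2^z"
    using card_Fm card_Nets by (intro mult_mono) auto
  also have "\<dots> = 8^z * 56^(d*z)" by (simp add: power_mult_distrib[symmetric])
  also have "\<dots> \<le> 8^(d*z) * 64^(d*z)"
    using assms by (intro mult_mono power_increasing power_mono) auto
  also have "\<dots> = 2^(9*d*z)"
  proof -
    have "(8::nat)^(d*z) * 64^(d*z) = 512^(d*z)" by (simp add: power_mult_distrib[symmetric])
    also have "\<dots> = (2^9)^(d*z)" by simp
    also have "\<dots> = 2^(9*d*z)" by (simp only: power_mult[symmetric] mult.assoc)
    finally show ?thesis .
  qed
  finally show ?thesis .
qed



definition hh :: "real \<Rightarrow> nat \<Rightarrow> nat \<Rightarrow> real" where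
  "hh r d n = r * sqrt ((real n + 1) / (6 * real d))"

definition wv :: "real \<Rightarrow> nat \<Rightarrow> (nat \<Rightarrow> nat) \<times> (nat \<Rightarrow> int) \<Rightarrow> nat \<Rightarrow> real" where
  "wv r d nm k = real_of_int (snd nm k) * hh r d (fst nm k)"

lemma round_point:
  fixes v :: "nat \<Rightarrow> real"
  assumes d: "d \<ge> 1" and r: "r > 0" and v: "(\<Sum>k<d. (v k)^2) \<le> r^2"
  shows "\<exists>nm \<in> Net d. (\<Sum>k<d. (v k - wv r d nm k)^2) \<le> r^2 / 8"
proof -
  define n where "n = (\<lambda>k\<in>{..<d}. nat \<lceil>real d * (v k)^2 / r^2\<rceil>)"
  define m where "m = (\<lambda>k\<in>{..<d}. round (v k / hh r d (n k)))"
  have dpos: "real d > 0" using d by simp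
  have n_lo: "real d * (v k)^2 / r^2 \<le> real (n k)" if "k < d" for k
    unfolding n_def using that by (simp add: real_nat_ceiling_ge)
  have n_hi: "real (n k) \<le> real d * (v k)^2 / r^2 + 1" if "k < d" for k
  proof -
    have "real d * (v k)^2 / r^2 \<ge> 0" by simp
    then show ?thesis unfolding n_def using that
      by (simp add: of_nat_nat)
  qed
  have sumn: "(\<Sum>k<d. real (n k)) \<le> 2 * real d"
  proof -
    have "(\<Sum>k<d. real (n k)) \<le> (\<Sum>k<d. real d * (v k)^2 / r^2 + 1)"
      using n_hi by (intro sum_mono) auto
    also have "\<dots> = real d / r^2 * (\<Sum>k<d. (v k)^2) + real d"
      by (simp add: sum.distrib sum_distrib_left sum_divide_distrib)
    also have "real d / r^2 * (\<Sum>k<d. (v k)^2) \<le> real d / r^2 * r^2"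
      using v by (intro mult_left_mono) auto
    also have "real d / r^2 * r^2 = real d" using r by simp
    finally show ?thesis by simp
  qed
  then have sumn_nat: "(\<Sum>k<d. n k) \<le> 2 * d" by (metis of_nat_le_iff of_nat_mult of_nat_numeral of_nat_sum)
  have nle: "n k \<le> 2 * d" if "k < d" for k
    using member_le_sum[of k "{..<d}" n] that sumn_nat by auto
  have hpos: "hh r d (n k) > 0" for k unfolding hh_def using r dpos by simp
  have hsq: "(hh r d (n k))^2 = r^2 * (real (n k) + 1) / (6 * real d)" for k
    unfolding hh_def using dpos by (simp add: power_mult_distrib)
  have mb: "\<bar>m k\<bar> \<le> 3" if k: "k < d" for k
  proof -
    let ?h = "hh r d (n k)"
    have "(v k)^2 \<le> r^2 * real (n k) / real d"
      using n_lo[OF k] r dpos by (simp add: field_simps)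
    also have "\<dots> \<le> 6 * ?h^2" unfolding hsq using dpos r by (simp add: field_simps)
    finally have "(v k)^2 \<le> 6 * ?h^2" .
    then have "(v k / ?h)^2 \<le> 6" using hpos[of k] by (simp add: power_divide field_simps)
    then have sq6: "(v k / ?h)^2 \<le> 6" .
    have "\<bar>v k / ?h\<bar> \<le> 5/2"
    proof (rule ccontr)
      assume "\<not> \<bar>v k / ?h\<bar> \<le> 5/2"
      then have "5/2 < \<bar>v k / ?h\<bar>" by simp
      then have "(5/2)^2 < \<bar>v k / ?h\<bar>^2" by (intro power_strict_mono) auto
      moreover have "\<bar>v k / ?h\<bar>^2 = (v k / ?h)^2" by (rule power2_abs)
      moreover have "(5/2::real)^2 = 25/4" by (simp add: power2_eq_square)
      ultimately show False using sq6 by linarith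
    qed
    moreover have "\<bar>of_int (round (v k / ?h)) - v k / ?h\<bar> \<le> 1/2" by (rule of_int_round_abs_le)
    ultimately have "\<bar>real_of_int (round (v k / ?h))\<bar> \<le> 3" by linarith
    then show ?thesis unfolding m_def using k by simp
  qed
  have "m \<in> Mset d"
  proof -
    have "m k \<in> {-3..3}" if "k \<in> {..<d}" for k using mb[of k] that by (auto simp: abs_le_iff)
    moreover have "m \<in> extensional {..<d}" unfolding m_def by simp
    ultimately show ?thesis unfolding Mset_def PiE_iff by blast
  qed
  moreover have "n \<in> Ncomp d"
  proof -
    have "n k \<in> {..2*d}" if "k \<in> {..<d}" for k using nle[of k] that by auto
    moreover have "n \<in> extensional {..<d}" unfolding n_def by simp
    ultimately show ?thesis unfolding Ncomp_def PiE_iff using sumn_nat by blast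
  qed
  ultimately have nm: "(n, m) \<in> Net d" unfolding Net_def by simp
  have err: "(v k - wv r d (n,m) k)^2 \<le> r^2 * (real (n k) + 1) / (24 * real d)" if k: "k < d" for k
  proof -
    let ?h = "hh r d (n k)"
    have "v k - wv r d (n,m) k = ?h * (v k / ?h - of_int (round (v k / ?h)))"
      unfolding wv_def m_def using k hpos[of k] by (simp add: field_simps)
    then have "(v k - wv r d (n,m) k)^2 = ?h^2 * (v k / ?h - of_int (round (v k / ?h)))^2"
      by (simp add: power_mult_distrib)
    also have "(v k / ?h - of_int (round (v k / ?h)))^2 \<le> (1/2)^2"
    proof -
      have "\<bar>v k / ?h - of_int (round (v k / ?h))\<bar> \<le> 1/2"
        using of_int_round_abs_le[of "v k / ?h"] by (simp add: abs_minus_commute)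
      then have "\<bar>v k / ?h - of_int (round (v k / ?h))\<bar>^2 \<le> (1/2)^2"
        by (intro power_mono) auto
      then show ?thesis by (simp only: power2_abs)
    qed
    then have "?h^2 * (v k / ?h - of_int (round (v k / ?h)))^2 \<le> ?h^2 * (1/2)^2"
      by (intro mult_left_mono) auto
    also have "\<dots> = r^2 * (real (n k) + 1) / (24 * real d)" unfolding hsq by (simp add: field_simps)
    finally show ?thesis .
  qed
  have "(\<Sum>k<d. (v k - wv r d (n,m) k)^2) \<le> (\<Sum>k<d. r^2 * (real (n k) + 1) / (24 * real d))"
    using err by (intro sum_mono) auto
  also have "\<dots> = r^2 / (24 * real d) * ((\<Sum>k<d. real (n k)) + real d)"
  proof -
    have "(\<Sum>k<d. r^2 * (real (n k) + 1) / (24 * real d)) = r^2 / (24 * real d) * (\<Sum>k<d. (real (n k) + 1))"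
      by (simp add: sum_distrib_left)
    also have "(\<Sum>k<d. (real (n k) + 1)) = (\<Sum>k<d. real (n k)) + real d" by (simp add: sum.distrib)
    finally show ?thesis .
  qed
  also have "\<dots> \<le> r^2 / (24 * real d) * (3 * real d)"
    using sumn by (intro mult_left_mono) auto
  also have "\<dots> = r^2 / 8" using dpos by simp
  finally show ?thesis using nm by blast
qed



lemma trav_ivt_snd:
  assumes T: "is_traversal z l T" and n: "n < length T" and v: "v \<le> snd (T!n)"
  shows "\<exists>r\<le>n. snd (T!r) = v"
  using n v
proof (induction n arbitrary: v)
  case 0 then show ?case using trav_first[OF T] by auto
next
  case (Suc n)
  show ?case
  proof (cases "v \<le> snd (T!n)")
    case True then show ?thesis using Suc by (meson Suc_lessD le_Suc_eq)
  next
    case False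
    with Suc.prems trav_step[OF T Suc.prems(1)] have "v = snd (T!Suc n)" by auto
    then show ?thesis by blast
  qed
qed

definition cpt :: "real list list \<Rightarrow> real \<Rightarrow> nat \<Rightarrow> (nat \<Rightarrow> nat) \<Rightarrow>
    (nat \<Rightarrow> (nat \<Rightarrow> nat) \<times> (nat \<Rightarrow> int)) \<Rightarrow> nat \<Rightarrow> bool \<Rightarrow> real list" where
  "cpt P r d f \<nu> j \<beta> = map (\<lambda>k. P!(f j)!k + wv r d (\<nu> j) k + (if k = 0 \<and> \<beta> then r/8 else 0)) [0..<d]"

definition cen :: "real list list \<Rightarrow> real \<Rightarrow> nat \<Rightarrow> nat \<Rightarrow> (nat \<Rightarrow> nat) \<Rightarrow>
    (nat \<Rightarrow> (nat \<Rightarrow> nat) \<times> (nat \<Rightarrow> int)) \<Rightarrow> (nat \<Rightarrow> bool) \<Rightarrow> real list list" where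
  "cen P r d z f \<nu> b = map (\<lambda>j. cpt P r d f \<nu> j (b j)) [0..<z]"

primrec bsel :: "(nat \<Rightarrow> bool \<Rightarrow> real list) \<Rightarrow> nat \<Rightarrow> bool" where
  "bsel pt 0 = False"
| "bsel pt (Suc j) = (pt (Suc j) False = pt j (bsel pt j))"

lemma bsel_distinct:
  assumes "\<And>j. pt j True \<noteq> pt j False"
  shows "pt (Suc j) (bsel pt (Suc j)) \<noteq> pt j (bsel pt j)"
  using assms[of "Suc j"] by (cases "pt (Suc j) False = pt j (bsel pt j)") auto

lemma cen_curves: "cen P r d z f \<nu> b \<in> curves d z"
  unfolding cen_def cpt_def curves_def by auto

lemma center_exists:
  assumes d: "d \<ge> 1" and z: "z \<ge> 1" and r: "r > 0"
    and P: "P \<in> curves d z" and Q: "Q \<in> curves d z" and PQ: "dfrechet P Q \<le> r"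
  shows "\<exists>f\<in>Fm z. \<exists>\<nu>\<in>Nets d z. \<exists>b\<in>Bits z.
           (\<forall>j. Suc j < z \<longrightarrow> cen P r d z f \<nu> b ! j \<noteq> cen P r d z f \<nu> b ! Suc j) \<and>
           dfrechet (cen P r d z f \<nu> b) Q \<le> r/2"
proof -
  have lP: "length P = z" and lQ: "length Q = z" using P Q unfolding curves_def by auto
  have lPi: "length (P!i) = d" if "i < z" for i using P that lP unfolding curves_def by (auto simp: nth_mem)
  have lQi: "length (Q!i) = d" if "i < z" for i using Q that lQ unfolding curves_def by (auto simp: nth_mem)
  obtain T where T: "is_traversal z z T" and Tc: "\<forall>(i,j)\<in>set T. euclid_dist (P!i) (Q!j) \<le> r"
    using dfrechet_le_trav[OF lP lQ z PQ] by blast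
  define f0 where "f0 j = (LEAST i. (i,j) \<in> set T)" for j
  have f0in: "(f0 j, j) \<in> set T" if "j < z" for j
    unfolding f0_def using trav_cover_snd[OF T that] by (metis LeastI_ex)
  have f0z: "f0 j < z" if "j < z" for j using trav_bounds[OF T f0in[OF that]] z by auto
  have f0mono: "f0 j \<le> f0 (Suc j)" if j: "Suc j < z" for j
  proof -
    obtain s where s: "s < length T" "T!s = (f0 (Suc j), Suc j)"
      using f0in[OF j] by (metis in_set_conv_nth)
    obtain a where a: "a \<le> s" "snd (T!a) = j" using trav_ivt_snd[OF T s(1), of j] s(2) by auto
    have "fst (T!a) \<le> fst (T!s)" using trav_mono[OF T a(1) s(1)] by simp
    moreover have "(fst (T!a), j) \<in> set T" using a s(1) by (metis nth_mem order.strict_trans1 prod.collapse)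
    then have "f0 j \<le> fst (T!a)" unfolding f0_def by (rule Least_le)
    ultimately show ?thesis using s(2) by simp
  qed
  define f where "f = restrict f0 {..<z}"
  have fF: "f \<in> Fm z" unfolding Fm_def f_def using f0z f0mono by auto
  have fj: "f j = f0 j" if "j < z" for j using that unfolding f_def by simp
  define v where "v j k = Q!j!k - P!(f0 j)!k" for j k
  have vb: "(\<Sum>k<d. (v j k)^2) \<le> r^2" if j: "j < z" for j
  proof -
    have "euclid_dist (P!(f0 j)) (Q!j) \<le> r" using Tc f0in[OF j] by auto
    then have "sqrt (\<Sum>k<d. (P!(f0 j)!k - Q!j!k)^2) \<le> sqrt (r^2)"
      unfolding euclid_dist_def using lPi[OF f0z[OF j]] r by simp
    then have "(\<Sum>k<d. (P!(f0 j)!k - Q!j!k)^2) \<le> r^2" by (simp only: real_sqrt_le_iff)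
    then show ?thesis unfolding v_def by (simp add: power2_commute)
  qed
  have "\<forall>j\<in>{..<z}. \<exists>nm\<in>Net d. (\<Sum>k<d. (v j k - wv r d nm k)^2) \<le> r^2 / 8"
    using round_point[OF d r vb] by auto
  then have "\<forall>j\<in>{..<z}. \<exists>nm. nm \<in> Net d \<and> (\<Sum>k<d. (v j k - wv r d nm k)^2) \<le> r^2 / 8" by blast
  from bchoice[OF this] obtain \<nu>0 where \<nu>0: "\<forall>j\<in>{..<z}. \<nu>0 j \<in> Net d \<and> (\<Sum>k<d. (v j k - wv r d (\<nu>0 j) k)^2) \<le> r^2 / 8"
    by blast
  define \<nu> where "\<nu> = restrict \<nu>0 {..<z}"
  have \<nu>N: "\<nu> \<in> Nets d z" unfolding Nets_def \<nu>_def using \<nu>0 by auto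
  define pt where "pt = cpt P r d f \<nu>"
  define b where "b = restrict (bsel pt) {..<z}"
  have bB: "b \<in> Bits z" unfolding b_def Bits_def by auto
  have cj: "cen P r d z f \<nu> b ! j = pt j (bsel pt j)" if "j < z" for j
    unfolding cen_def pt_def b_def using that by simp
  have ptne: "pt j True \<noteq> pt j False" for j
  proof
    assume "pt j True = pt j False"
    then have "pt j True ! 0 = pt j False ! 0" by simp
    then show False unfolding pt_def cpt_def using d r by simp
  qed
  have distinct: "cen P r d z f \<nu> b ! j \<noteq> cen P r d z f \<nu> b ! Suc j" if "Suc j < z" for j
    using bsel_distinct[of pt j, OF ptne] cj[of j] cj[of "Suc j"] that by auto
  have close: "euclid_dist (pt j \<beta>) (Q!j) \<le> r/2" if j: "j < z" for j \<beta>
  proof -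
    have len1: "length (pt j \<beta>) = d" "length (pt j False) = d" unfolding pt_def cpt_def by auto
    have "euclid_dist (pt j \<beta>) (pt j False) = sqrt (\<Sum>k<d. (if k = 0 \<and> \<beta> then r/8 else 0)^2)"
      unfolding euclid_dist_def using len1 unfolding pt_def cpt_def by simp
    also have "(\<Sum>k<d. (if k = 0 \<and> \<beta> then r/8 else 0)^2) = (\<Sum>k<d. if k = 0 then (if \<beta> then (r/8)^2 else 0) else 0)"
      by (intro sum.cong) auto
    also have "\<dots> = (if \<beta> then (r/8)^2 else 0)" using d by simp
    also have "sqrt \<dots> \<le> r/8" using r by auto
    finally have e1: "euclid_dist (pt j \<beta>) (pt j False) \<le> r/8" .
    have "(euclid_dist (pt j False) (Q!j))^2 = (\<Sum>k<d. (v j k - wv r d (\<nu>0 j) k)^2)"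
    proof -
      have "(euclid_dist (pt j False) (Q!j))^2 = (\<Sum>k<d. (pt j False ! k - Q!j!k)^2)"
        unfolding euclid_dist_def using len1 by (simp add: sum_nonneg)
      also have "\<dots> = (\<Sum>k<d. (v j k - wv r d (\<nu>0 j) k)^2)"
      proof (intro sum.cong refl)
        fix k assume k: "k \<in> {..<d}"
        have "pt j False ! k - Q!j!k = wv r d (\<nu>0 j) k - v j k"
          unfolding pt_def cpt_def v_def using j k by (simp add: fj \<nu>_def)
        then show "(pt j False ! k - Q!j!k)^2 = (v j k - wv r d (\<nu>0 j) k)^2"
          by (simp only: power2_commute)
      qed
      finally show ?thesis .
    qed
    also have "\<dots> \<le> r^2/8" using bspec[OF \<nu>0, of j] j by simp
    also have "\<dots> \<le> (3*r/8)^2" by (simp add: power2_eq_square)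
    finally have sq: "(euclid_dist (pt j False) (Q!j))^2 \<le> (3*r/8)^2" .
    have "euclid_dist (pt j False) (Q!j) \<le> 3*r/8"
      by (rule power2_le_imp_le[OF sq]) (use r in simp)
    moreover have "euclid_dist (pt j \<beta>) (Q!j) \<le> euclid_dist (pt j \<beta>) (pt j False) + euclid_dist (pt j False) (Q!j)"
      by (rule euclid_tri) (simp_all add: len1 lQi[OF j])
    ultimately show ?thesis using e1 by linarith
  qed
  have lc: "length (cen P r d z f \<nu> b) = z" unfolding cen_def by simp
  have "euclid_dist (cen P r d z f \<nu> b ! j) (Q ! j) \<le> r/2" if "j < z" for j
    unfolding cj[OF that] by (rule close[OF that])
  then have "dfrechet (cen P r d z f \<nu> b) Q \<le> r/2"
    by (intro dfrechet_diag[OF lc lQ z])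
  then show ?thesis using fF \<nu>N bB distinct by (intro bexI[of _ f] bexI[of _ \<nu>] bexI[of _ b]) auto
qed

lemma upper_ok:
  assumes d: "d \<ge> 1" and z: "z \<ge> 1"
  shows "doubling_ok (frechet_classes d z) class_dist (real (9*d*z))"
  unfolding doubling_ok_def
proof (intro ballI allI impI)
  fix x r assume x: "x \<in> frechet_classes d z" and r: "(r::real) > 0"
  let ?S = "frechet_classes d z"
  define P where "P = (SOME P. P \<in> x)"
  have P: "P \<in> curves d z" using class_rep[OF x z] unfolding P_def by blast
  define Par where "Par = Fm z \<times> Nets d z \<times> Bits z"
  define C where "C = (\<lambda>(f, \<nu>, b). cls d z (cen P r d z f \<nu> b)) ` Par"
  have finPar: "finite Par" unfolding Par_def using finite_Fm finite_Nets finite_Bits by auto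
  have "finite C" unfolding C_def using finPar by simp
  moreover have "C \<subseteq> ?S" unfolding C_def using cls_in[OF cen_curves] by auto
  moreover have "real (card C) \<le> 2 powr real (9*d*z)"
  proof -
    have "card C \<le> card Par" unfolding C_def using finPar by (rule card_image_le)
    also have "\<dots> \<le> 2^(9*d*z)" unfolding Par_def by (rule card_params[OF d])
    finally have "card C \<le> 2^(9*d*z)" .
    then have "real (card C) \<le> real (2^(9*d*z))" by (simp only: of_nat_le_iff)
    also have "real (2^(9*d*z)) = (2::real)^(9*d*z)" by (simp only: of_nat_power of_nat_numeral)
    also have "\<dots> = 2 powr real (9*d*z)" by (rule powr_realpow[symmetric]) simp
    finally show ?thesis .
  qed
  moreover have "cball_in ?S class_dist x r \<subseteq> (\<Union>c\<in>C. cball_in ?S class_dist c (r / 2))"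
  proof
    fix y assume y: "y \<in> cball_in ?S class_dist x r"
    then have yS: "y \<in> ?S" and xy: "class_dist x y \<le> r" unfolding cball_in_def by auto
    define Q where "Q = (SOME Q. Q \<in> y)"
    have Q: "Q \<in> curves d z" using class_rep[OF yS z] unfolding Q_def by blast
    have PQ: "dfrechet P Q \<le> r" using xy unfolding class_dist_def P_def Q_def by simp
    obtain f \<nu> b where f: "f \<in> Fm z" and \<nu>: "\<nu> \<in> Nets d z" and b: "b \<in> Bits z"
      and ds: "\<forall>j. Suc j < z \<longrightarrow> cen P r d z f \<nu> b ! j \<noteq> cen P r d z f \<nu> b ! Suc j"
      and cl: "dfrechet (cen P r d z f \<nu> b) Q \<le> r/2"
      using center_exists[OF d z r P Q PQ] by blast
    let ?W = "cen P r d z f \<nu> b"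
    have single: "cls d z ?W = {?W}" unfolding cls_def
      using class_singleton[OF cen_curves z] ds by blast
    have "(f, \<nu>, b) \<in> Par" unfolding Par_def using f \<nu> b by simp
    then have "cls d z ?W \<in> C" unfolding C_def by (rule rev_image_eqI) simp
    moreover have "class_dist (cls d z ?W) y \<le> r/2"
      unfolding class_dist_def single using cl Q_def by simp
    ultimately show "y \<in> (\<Union>c\<in>C. cball_in ?S class_dist c (r / 2))"
      unfolding cball_in_def using yS by blast
  qed
  ultimately show "\<exists>C. finite C \<and> C \<subseteq> ?S \<and> real (card C) \<le> 2 powr real (9*d*z) \<and>
      cball_in ?S class_dist x r \<subseteq> (\<Union>c\<in>C. cball_in ?S class_dist c (r / 2))" by blast
qed

theorem proposition9p1:
  shows "\<exists>c1 c2 :: real. c1 > 0 \<and> c2 > 0 \<and>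
    (\<forall>d z :: nat. d \<ge> 1 \<longrightarrow> z \<ge> 1 \<longrightarrow>
       ereal (c1 * real d * real z) \<le> doubling_dim (frechet_classes d z) class_dist \<and>
       doubling_dim (frechet_classes d z) class_dist \<le> ereal (c2 * real d * real z))"
proof (intro exI conjI allI impI)
  show "(1/8::real) > 0" by simp
  show "(9::real) > 0" by simp
  fix d z :: nat assume d: "d \<ge> 1" and z: "z \<ge> 1"
  show "ereal (1/8 * real d * real z) \<le> doubling_dim (frechet_classes d z) class_dist"
    unfolding doubling_dim_def
  proof (rule Inf_greatest)
    fix y assume "y \<in> ereal ` {t. t \<ge> 0 \<and> doubling_ok (frechet_classes d z) class_dist t}"
    then obtain t where y: "y = ereal t" and ok: "doubling_ok (frechet_classes d z) class_dist t" by auto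
    show "ereal (1/8 * real d * real z) \<le> y" using lower_bound[OF d z ok] y by simp
  qed
  show "doubling_dim (frechet_classes d z) class_dist \<le> ereal (9 * real d * real z)"
    unfolding doubling_dim_def
  proof (rule Inf_lower)
    have "doubling_ok (frechet_classes d z) class_dist (real (9*d*z))" by (rule upper_ok[OF d z])
    then show "ereal (9 * real d * real z) \<in> ereal ` {t. t \<ge> 0 \<and> doubling_ok (frechet_classes d z) class_dist t}"
      by (intro imageI) simp
  qed
qed

end
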